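(* Let $u\in A$ be a minimiser of $\mathcal M$ on $A$. Then $u$ is also a minimiser of $\mathcal L$ on $A$.
   Context: Let $\Omega\subset\mathbb{R}^n$, $p_0,p_1\in\Omega$, and $A=\{u\in H^1([0,1],\Omega): u(0)=p_0,\ u(1)=p_1\}$. Let $V:\Omega\to\mathbb{R}$ be continuous and strictly positive. $\mathcal M(u)=\frac12\int_0^1|\dot u(t)|^2dt\int_0^1V(u(t))\,dt$ and $\mathcal L(u)=\int_0^1|\dot u(t)|\sqrt{V(u(t))}\,dt$. *)

theory Defs
  imports "HOL-Analysis.Analysis"
begin

text \<open>H^1([0,1], R^n) is realised as the space of absolutely continuous curves with
square-integrable derivative: u is in H^1 with weak derivative g iff g is square
integrable on [0,1] and u(t) = u(0) + int_0^t g for all t in [0,1].\<close>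

definition H1_weak_deriv :: "(real \<Rightarrow> real ^ 'n) \<Rightarrow> (real \<Rightarrow> real ^ 'n) \<Rightarrow> bool" where
  "H1_weak_deriv u g \<longleftrightarrow>
     g absolutely_integrable_on {0..1} \<and>
     (\<lambda>t. (norm (g t))\<^sup>2) integrable_on {0..1} \<and>
     (\<forall>t\<in>{0..1}. u t = u 0 + integral {0..t} g)"

definition H1 :: "(real \<Rightarrow> real ^ 'n) \<Rightarrow> bool" where
  "H1 u \<longleftrightarrow> (\<exists>g. H1_weak_deriv u g)"

text \<open>The (weak) derivative; it is unique almost everywhere, which is all the integrals see.\<close>
definition wderiv :: "(real \<Rightarrow> real ^ 'n) \<Rightarrow> real \<Rightarrow> real ^ 'n" where
  "wderiv u = (SOME g. H1_weak_deriv u g)"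

definition admissible :: "(real ^ 'n) set \<Rightarrow> real ^ 'n \<Rightarrow> real ^ 'n \<Rightarrow> (real \<Rightarrow> real ^ 'n) set" where
  "admissible \<Omega> p0 p1 = {u. H1 u \<and> (\<forall>t\<in>{0..1}. u t \<in> \<Omega>) \<and> u 0 = p0 \<and> u 1 = p1}"

definition Mfun :: "(real ^ 'n \<Rightarrow> real) \<Rightarrow> (real \<Rightarrow> real ^ 'n) \<Rightarrow> real" where
  "Mfun V u = (1/2) * integral {0..1} (\<lambda>t. (norm (wderiv u t))\<^sup>2) * integral {0..1} (\<lambda>t. V (u t))"

definition Lfun :: "(real ^ 'n \<Rightarrow> real) \<Rightarrow> (real \<Rightarrow> real ^ 'n) \<Rightarrow> real" where
  "Lfun V u = integral {0..1} (\<lambda>t. norm (wderiv u t) * sqrt (V (u t)))"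

end

theory Submission
  imports Defs
begin

lemma uniq_real:
  fixes k :: "real \<Rightarrow> real"
  assumes kint: "k absolutely_integrable_on {0..1}"
    and k0: "\<And>t. t \<in> {0..1} \<Longrightarrow> integral {0..t} k = 0"
  shows "negligible {t\<in>{0..1}. k t \<noteq> 0}"
proof -
  define kk where "kk x = indicator {0..1::real} x *\<^sub>R k x" for x
  have kkint: "integrable lebesgue kk"
    using kint unfolding set_integrable_def kk_def by simp
  then have "kk \<in> borel_measurable (completion lborel)" by auto
  then obtain k0 where k0b: "k0 \<in> borel_measurable lborel" and ae: "AE x in lborel. kk x = k0 x"
    using completion_ex_borel_measurable_real by blast
  have aeL: "AE x in lebesgue. kk x = k0 x" using ae by (rule AE_completion)
  have k0intL: "integrable lebesgue k0"
  proof -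
    have "k0 \<in> borel_measurable lebesgue" using k0b by (rule measurable_completion)
    moreover have "kk \<in> borel_measurable lebesgue" using kkint by auto
    ultimately show ?thesis using integrable_cong_AE[OF _ _ aeL] kkint by blast
  qed
  have k0int: "integrable lborel k0"
    using k0intL integrable_completion k0b by blast
  have intA: "(LINT x|lborel. indicator {a<..} x * k0 x) = 0" for a :: real
  proof -
    have m: "(\<lambda>x. indicator {a<..} x * k0 x) \<in> borel_measurable lborel" using k0b by measurable
    have "(LINT x|lborel. indicator {a<..} x * k0 x) = (LINT x|lebesgue. indicator {a<..} x * k0 x)"
      using integral_completion[OF m] by simp
    also have "\<dots> = (LINT x|lebesgue. indicator {a<..} x *\<^sub>R kk x)"
    proof (rule integral_cong_AE)
      show "(\<lambda>x. indicator {a<..} x * k0 x) \<in> borel_measurable lebesgue"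
        using m by (rule measurable_completion)
      have "kk \<in> borel_measurable lebesgue" using kkint by auto
      then show "(\<lambda>x. indicator {a<..} x *\<^sub>R kk x) \<in> borel_measurable lebesgue"
        by (intro borel_measurable_scaleR borel_measurable_indicator) auto
      show "AE x in lebesgue. indicator {a<..} x * k0 x = indicator {a<..} x *\<^sub>R kk x"
        using aeL by eventually_elim simp
    qed
    also have "\<dots> = integral {a<..} kk"
      using set_lebesgue_integral_eq_integral(2)[of "{a<..}" kk] kkint integrable_mult_indicator[of "{a<..}" lebesgue kk]
      unfolding set_lebesgue_integral_def set_integrable_def
      by simp
    also have "\<dots> = integral ({0..1} \<inter> {a<..}) k"
      unfolding kk_def integral_restrict_Int[symmetric] by (rule integral_cong) (simp add: indicator_def)
    also have "\<dots> = 0"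
    proof (cases "a < 0")
      case True
      then have "{0..1} \<inter> {a<..} = {0..1::real}" by auto
      then show ?thesis using k0[of 1] by simp
    next
      case False
      show ?thesis
      proof (cases "a < 1")
        case True
        have "{0..1} \<inter> {a<..} = {a<..1::real}" using False by auto
        moreover have "integral {a<..1} k = integral {a..1} k"
          by (rule integral_spike_set) (auto intro: negligible_subset[of "{a}"])
        moreover have "integral {0..a} k + integral {a..1} k = integral {0..1} k"
          using False True Henstock_Kurzweil_Integration.integral_combine[where a=0 and c=a and b=1 and f=k] kint
          by (simp add: absolutely_integrable_on_def)
        ultimately show ?thesis using k0[of a] k0[of 1] False True by simp
      next
        case F2: False
        then have "{0..1} \<inter> {a<..} = ({}::real set)" by auto
        then show ?thesis by simp
      qed
    qed
    finally show ?thesis .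
  qed
  have "density lborel (\<lambda>x. ennreal (max 0 (k0 x))) = density lborel (\<lambda>x. ennreal (max 0 (- k0 x)))"
  proof (rule measure_eqI_lessThan)
    fix a :: real
    have i1: "integrable lborel (\<lambda>x. indicator {a<..} x * max 0 (k0 x))"
      by (rule integrable_mult_indicator[OF _ integrable_max[OF integrable_zero k0int], simplified, of "{a<..}"]) simp
    have i2: "integrable lborel (\<lambda>x. indicator {a<..} x * max 0 (- k0 x))"
      using integrable_mult_indicator[OF _ integrable_max[OF integrable_zero integrable_minus[OF k0int]], of "{a<..}"] by simp
    have e1: "emeasure (density lborel (\<lambda>x. ennreal (max 0 (k0 x)))) {a<..} = ennreal (LINT x|lborel. indicator {a<..} x * max 0 (k0 x))"
    proof -
      have "emeasure (density lborel (\<lambda>x. ennreal (max 0 (k0 x)))) {a<..} = (\<integral>\<^sup>+x. ennreal (max 0 (k0 x)) * indicator {a<..} x \<partial>lborel)"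
        using k0b by (subst emeasure_density) auto
      also have "\<dots> = (\<integral>\<^sup>+x. ennreal (indicator {a<..} x * max 0 (k0 x)) \<partial>lborel)"
        by (rule nn_integral_cong) (simp add: indicator_def)
      also have "\<dots> = ennreal (LINT x|lborel. indicator {a<..} x * max 0 (k0 x))"
        using i1 by (rule nn_integral_eq_integral) simp
      finally show ?thesis .
    qed
    have e2: "emeasure (density lborel (\<lambda>x. ennreal (max 0 (- k0 x)))) {a<..} = ennreal (LINT x|lborel. indicator {a<..} x * max 0 (- k0 x))"
    proof -
      have "emeasure (density lborel (\<lambda>x. ennreal (max 0 (- k0 x)))) {a<..} = (\<integral>\<^sup>+x. ennreal (max 0 (- k0 x)) * indicator {a<..} x \<partial>lborel)"
        using k0b by (subst emeasure_density) auto
      also have "\<dots> = (\<integral>\<^sup>+x. ennreal (indicator {a<..} x * max 0 (- k0 x)) \<partial>lborel)"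
        by (rule nn_integral_cong) (simp add: indicator_def)
      also have "\<dots> = ennreal (LINT x|lborel. indicator {a<..} x * max 0 (- k0 x))"
        using i2 by (rule nn_integral_eq_integral) simp
      finally show ?thesis .
    qed
    have "(LINT x|lborel. indicator {a<..} x * max 0 (k0 x)) - (LINT x|lborel. indicator {a<..} x * max 0 (- k0 x))
        = (LINT x|lborel. indicator {a<..} x * k0 x)"
    proof -
      have "(LINT x|lborel. indicator {a<..} x * max 0 (k0 x)) - (LINT x|lborel. indicator {a<..} x * max 0 (- k0 x))
        = (LINT x|lborel. indicator {a<..} x * max 0 (k0 x) - indicator {a<..} x * max 0 (- k0 x))"
        using i1 i2 by (rule Bochner_Integration.integral_diff[symmetric])
      also have "\<dots> = (LINT x|lborel. indicator {a<..} x * k0 x)"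
        by (rule Bochner_Integration.integral_cong) (auto simp: indicator_def max_def)
      finally show ?thesis .
    qed
    then show "emeasure (density lborel (\<lambda>x. ennreal (max 0 (k0 x)))) {a<..} = emeasure (density lborel (\<lambda>x. ennreal (max 0 (- k0 x)))) {a<..}"
      using intA[of a] e1 e2 by simp
    show "emeasure (density lborel (\<lambda>x. ennreal (max 0 (k0 x)))) {a<..} < \<infinity>"
      using e1 by simp
  qed auto
  then have "AE x in lborel. ennreal (max 0 (k0 x)) = ennreal (max 0 (- k0 x))"
    using k0b by (subst (asm) sigma_finite_measure.density_unique_iff[OF sigma_finite_lborel]) auto
  then have "AE x in lborel. k0 x = 0"
    by eventually_elim (auto simp: max_def split: if_splits)
  with ae have "AE x in lborel. kk x = 0" by eventually_elim auto
  then obtain N where N: "{x \<in> space lborel. \<not> kk x = 0} \<subseteq> N" "emeasure lborel N = 0" "N \<in> sets lborel"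
    by (rule AE_E)
  then have "negligible N"
    by (simp add: negligible_iff_null_sets null_sets_completionI null_setsI)
  moreover have "{t\<in>{0..1}. k t \<noteq> 0} \<subseteq> N" using N(1) by (auto simp: kk_def)
  ultimately show ?thesis by (rule negligible_subset)
qed


lemma cov_real:
  fixes \<psi> \<rho> f :: "real \<Rightarrow> real"
  assumes "a \<in> {0..1}" and der: "\<And>s. s \<in> {0..1} \<Longrightarrow> (\<psi> has_real_derivative \<rho> s) (at s within {0..1})"
    and inj: "inj_on \<psi> {0..1}" and rp: "\<And>s. s \<in> {0..1} \<Longrightarrow> \<rho> s > 0"
    and img: "\<psi> ` {0..a} = {0..\<psi> a}"
    and F: "F absolutely_integrable_on {0..a}"
    and eq: "\<And>s. s \<in> {0..a} \<Longrightarrow> \<rho> s * f (\<psi> s) = F s"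
  shows "f absolutely_integrable_on {0..\<psi> a} \<and> integral {0..\<psi> a} f = integral {0..a} F"
proof -
  have "(\<lambda>x. \<bar>\<rho> x\<bar> * f (\<psi> x)) absolutely_integrable_on {0..a} \<and>
           integral {0..a} (\<lambda>x. \<bar>\<rho> x\<bar> * f (\<psi> x)) = integral {0..a} F
     \<longleftrightarrow> f absolutely_integrable_on (\<psi> ` {0..a}) \<and> integral (\<psi> ` {0..a}) f = integral {0..a} F"
  proof (rule has_absolute_integral_change_of_variables_1')
    show "{0..a} \<in> sets lebesgue" by simp
    show "(\<psi> has_real_derivative \<rho> x) (at x within {0..a})" if "x \<in> {0..a}" for x
      using der[of x] that assms(1) by (auto intro: DERIV_subset)
    show "inj_on \<psi> {0..a}" using inj assms(1) by (auto intro: inj_on_subset)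
  qed
  moreover have "(\<lambda>x. \<bar>\<rho> x\<bar> * f (\<psi> x)) absolutely_integrable_on {0..a}"
  proof -
    have "set_integrable lebesgue {0..a} (\<lambda>x. \<bar>\<rho> x\<bar> * f (\<psi> x)) = set_integrable lebesgue {0..a} F"
      by (rule set_integrable_cong) (use eq rp assms(1) in \<open>auto simp: abs_of_pos\<close>)
    then show ?thesis using F by simp
  qed
  moreover have "integral {0..a} (\<lambda>x. \<bar>\<rho> x\<bar> * f (\<psi> x)) = integral {0..a} F"
    by (rule integral_cong) (use eq rp assms(1) in \<open>auto simp: abs_of_pos\<close>)
  ultimately show ?thesis using img by simp
qed

lemma reparam:
  fixes w g :: "real \<Rightarrow> real ^ 'n" and \<rho> :: "real \<Rightarrow> real" and V :: "real ^ 'n \<Rightarrow> real"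
  assumes H: "H1_weak_deriv w g"
    and rc: "continuous_on {0..1} \<rho>" and rp: "\<And>s. s \<in> {0..1} \<Longrightarrow> \<rho> s > 0"
    and r1: "integral {0..1} \<rho> = 1"
    and Vc: "continuous_on {0..1} (\<lambda>s. V (w s))"
  obtains \<phi> h where "\<forall>t\<in>{0..1}. \<phi> t \<in> {0..1}" "\<phi> 0 = 0" "\<phi> 1 = 1"
    "H1_weak_deriv (\<lambda>t. w (\<phi> t)) h"
    "integral {0..1} (\<lambda>t. (norm (h t))\<^sup>2) = integral {0..1} (\<lambda>s. (norm (g s))\<^sup>2 / \<rho> s)"
    "integral {0..1} (\<lambda>t. V (w (\<phi> t))) = integral {0..1} (\<lambda>s. V (w s) * \<rho> s)"
proof -
  define \<psi> where "\<psi> s = integral {0..s} \<rho>" for s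
  have gint: "g absolutely_integrable_on {0..1}" and g2: "(\<lambda>t. (norm (g t))\<^sup>2) integrable_on {0..1}"
    and wg: "\<And>t. t \<in> {0..1} \<Longrightarrow> w t = w 0 + integral {0..t} g"
    using H unfolding H1_weak_deriv_def by blast+
  have rint: "\<rho> integrable_on {0..1}" using rc by (rule integrable_continuous_interval)
  have der: "(\<psi> has_real_derivative \<rho> s) (at s within {0..1})" if "s \<in> {0..1}" for s
    unfolding \<psi>_def using rc that by (rule integral_has_real_derivative)
  have \<psi>c: "continuous_on {0..1} \<psi>"
    unfolding \<psi>_def using rint by (rule indefinite_integral_continuous_1)
  obtain m where m: "m > 0" "\<And>s. s \<in> {0..1} \<Longrightarrow> m \<le> \<rho> s"
  proof -
    obtain s0 where "s0 \<in> {0..1}" "\<And>s. s \<in> {0..1} \<Longrightarrow> \<rho> s0 \<le> \<rho> s"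
      using continuous_attains_inf[OF compact_Icc _ rc] by auto
    then show ?thesis using that[of "\<rho> s0"] rp by auto
  qed
  have mono: "\<psi> s < \<psi> s'" if "s \<in> {0..1}" "s' \<in> {0..1}" "s < s'" for s s'
  proof -
    have "integral {0..s} \<rho> + integral {s..s'} \<rho> = integral {0..s'} \<rho>"
      using that integrable_on_subinterval[OF rint, of 0 s']
      by (intro Henstock_Kurzweil_Integration.integral_combine) auto
    moreover have "integral {s..s'} (\<lambda>_. m) \<le> integral {s..s'} \<rho>"
      using that m integrable_on_subinterval[OF rint, of s s']
      by (intro integral_le) auto
    moreover have "(s' - s) * m > 0" using that m by simp
    ultimately show ?thesis using that unfolding \<psi>_def by simp
  qed
  have inj: "inj_on \<psi> {0..1}"
    by (rule inj_onI) (metis mono linorder_neqE_linordered_idom order_less_irrefl)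
  have \<psi>0: "\<psi> 0 = 0" unfolding \<psi>_def by simp
  have \<psi>1: "\<psi> 1 = 1" unfolding \<psi>_def using r1 by simp
  have img: "\<psi> ` {0..a} = {0..\<psi> a}" if a01: "a \<in> {0..1}" for a
  proof
    show "\<psi> ` {0..a} \<subseteq> {0..\<psi> a}"
    proof
      fix y assume "y \<in> \<psi> ` {0..a}"
      then obtain s where s: "s \<in> {0..a}" "y = \<psi> s" by auto
      then show "y \<in> {0..\<psi> a}" using that mono[of 0 s] mono[of s a] \<psi>0
        by (cases "s = 0"; cases "s = a") (auto simp: less_imp_le)
    qed
    show "{0..\<psi> a} \<subseteq> \<psi> ` {0..a}"
    proof
      fix y assume y: "y \<in> {0..\<psi> a}"
      have "continuous_on {0..a} \<psi>" using \<psi>c a01 by (auto intro: continuous_on_subset)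
      then obtain x where "0 \<le> x" "x \<le> a" "\<psi> x = y"
        using IVT'[of \<psi> 0 y a] y \<psi>0 a01 by auto
      then show "y \<in> \<psi> ` {0..a}" by auto
    qed
  qed
  have img1: "\<psi> ` {0..1} = {0..1}" using img[of 1] \<psi>1 by simp
  define \<phi> where "\<phi> = inv_into {0..1} \<psi>"
  have \<phi>in: "\<phi> t \<in> {0..1}" if "t \<in> {0..1}" for t
    using that img1 unfolding \<phi>_def by (metis inv_into_into)
  have \<psi>\<phi>: "\<psi> (\<phi> t) = t" if "t \<in> {0..1}" for t
    using that img1 unfolding \<phi>_def by (metis f_inv_into_f)
  have \<phi>\<psi>: "\<phi> (\<psi> s) = s" if "s \<in> {0..1}" for s
    using that inj unfolding \<phi>_def by (simp add: inv_into_f_f)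
  have \<phi>0: "\<phi> 0 = 0" using \<phi>\<psi>[of 0] \<psi>0 by simp
  have \<phi>1: "\<phi> 1 = 1" using \<phi>\<psi>[of 1] \<psi>1 by simp
  define h where "h t = (1 / \<rho> (\<phi> t)) *\<^sub>R g (\<phi> t)" for t
  have hpsi: "\<rho> s *\<^sub>R h (\<psi> s) = g s" if "s \<in> {0..1}" for s
    using that rp[of s] by (simp add: h_def \<phi>\<psi>)
  have gcomp: "(\<lambda>s. g s $ i) absolutely_integrable_on {0..1}" for i
    using absolutely_integrable_component[OF gint, of "axis i 1"] by (simp add: inner_axis)
  have comp: "(\<lambda>t. h t $ i) absolutely_integrable_on {0..\<psi> a} \<and>
      integral {0..\<psi> a} (\<lambda>t. h t $ i) = integral {0..a} (\<lambda>s. g s $ i)" if a01: "a \<in> {0..1}" for a i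
  proof (rule cov_real[OF a01 der inj rp img[OF a01]])
    show "(\<lambda>s. g s $ i) absolutely_integrable_on {0..a}"
      using gcomp[of i] a01 by (auto intro: absolutely_integrable_on_subinterval)
    show "\<rho> s * h (\<psi> s) $ i = g s $ i" if "s \<in> {0..a}" for s
    proof -
      have "s \<in> {0..1}" using that a01 by auto
      then have "(\<rho> s *\<^sub>R h (\<psi> s)) $ i = g s $ i" using hpsi by simp
      then show ?thesis by simp
    qed
  qed
  have habs: "h absolutely_integrable_on {0..1}"
  proof (rule absolutely_integrable_componentwise)
    fix b :: "real ^ 'n" assume "b \<in> Basis"
    then obtain i where b: "b = axis i 1" by (auto simp: Basis_vec_def)
    show "(\<lambda>x. h x \<bullet> b) absolutely_integrable_on {0..1}"
      using comp[of 1 i] \<psi>1 by (simp add: b inner_axis)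
  qed
  have hint: "h integrable_on {0..t}" if "t \<in> {0..1}" for t
    using habs that by (auto intro: integrable_on_subinterval simp: absolutely_integrable_on_def)
  have gint': "g integrable_on {0..t}" if "t \<in> {0..1}" for t
    using gint that by (auto intro: integrable_on_subinterval simp: absolutely_integrable_on_def)
  have indef: "w (\<phi> t) = w (\<phi> 0) + integral {0..t} h" if t01: "t \<in> {0..1}" for t
  proof -
    have "integral {0..t} h $ i = (w (\<phi> t) - w 0) $ i" for i
    proof -
      have "integral {0..t} h $ i = integral {0..t} (\<lambda>x. h x $ i)"
        using hint[OF t01] by simp
      also have "\<dots> = integral {0..\<phi> t} (\<lambda>s. g s $ i)"
        using comp[OF \<phi>in[OF t01], of i] \<psi>\<phi>[OF t01] by simp
      also have "\<dots> = integral {0..\<phi> t} g $ i"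
        using gint'[OF \<phi>in[OF t01]] by simp
      also have "\<dots> = (w (\<phi> t) - w 0) $ i"
        using wg[OF \<phi>in[OF t01]] by simp
      finally show ?thesis .
    qed
    then show ?thesis using \<phi>0 by (simp add: vec_eq_iff)
  qed
  have bnd: "bounded ((\<lambda>s. 1 / \<rho> s) ` {0..1})"
  proof -
    have "continuous_on {0..1} (\<lambda>s. 1 / \<rho> s)"
      using rc rp by (auto intro!: continuous_intros simp: less_imp_neq[symmetric] dest: rp)
    then show ?thesis by (simp add: compact_continuous_image compact_imp_bounded)
  qed
  have Fabs: "(\<lambda>s. (norm (g s))\<^sup>2 / \<rho> s) absolutely_integrable_on {0..1}"
  proof -
    have "(\<lambda>s. 1 / \<rho> s) \<in> borel_measurable (lebesgue_on {0..1})"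
      using rc rp by (intro continuous_imp_measurable_on_sets_lebesgue) (auto intro!: continuous_intros dest: rp)
    moreover have "(\<lambda>s. (norm (g s))\<^sup>2) absolutely_integrable_on {0..1}"
      using g2 by (rule nonnegative_absolutely_integrable_1) simp
    ultimately have "(\<lambda>s. 1 / \<rho> s * (norm (g s))\<^sup>2) absolutely_integrable_on {0..1}"
      using bnd by (intro absolutely_integrable_bounded_measurable_product_real) auto
    then show ?thesis by simp
  qed
  have norm2: "(\<lambda>t. (norm (h t))\<^sup>2) absolutely_integrable_on {0..\<psi> 1} \<and>
      integral {0..\<psi> 1} (\<lambda>t. (norm (h t))\<^sup>2) = integral {0..1} (\<lambda>s. (norm (g s))\<^sup>2 / \<rho> s)"
  proof (rule cov_real[OF _ der inj rp img Fabs])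
    show "\<rho> s * (norm (h (\<psi> s)))\<^sup>2 = (norm (g s))\<^sup>2 / \<rho> s" if "s \<in> {0..1}" for s
    proof -
      have "h (\<psi> s) = (1 / \<rho> s) *\<^sub>R g s" using that by (simp add: h_def \<phi>\<psi>)
      then show ?thesis using rp[OF that] by (simp add: power2_eq_square field_simps)
    qed
  qed auto
  have Vabs: "(\<lambda>s. V (w s) * \<rho> s) absolutely_integrable_on {0..1}"
    using Vc rc by (intro absolutely_integrable_continuous_real continuous_intros) auto
  have Vint: "(\<lambda>t. V (w (\<phi> t))) absolutely_integrable_on {0..\<psi> 1} \<and>
      integral {0..\<psi> 1} (\<lambda>t. V (w (\<phi> t))) = integral {0..1} (\<lambda>s. V (w s) * \<rho> s)"
    by (rule cov_real[OF _ der inj rp img Vabs]) (auto simp: \<phi>\<psi>)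
  show ?thesis
  proof (rule that[of \<phi> h])
    show "\<forall>t\<in>{0..1}. \<phi> t \<in> {0..1}" using \<phi>in by blast
    show "\<phi> 0 = 0" "\<phi> 1 = 1" by (fact \<phi>0, fact \<phi>1)
    show "H1_weak_deriv (\<lambda>t. w (\<phi> t)) h"
      unfolding H1_weak_deriv_def
    proof (intro conjI ballI)
      show "h absolutely_integrable_on {0..1}" by (fact habs)
      show "(\<lambda>t. (norm (h t))\<^sup>2) integrable_on {0..1}"
        using norm2 \<psi>1 set_lebesgue_integral_eq_integral(1) by auto
      show "w (\<phi> t) = w (\<phi> 0) + integral {0..t} h" if "t \<in> {0..1}" for t
        using that by (rule indef)
    qed
    show "integral {0..1} (\<lambda>t. (norm (h t))\<^sup>2) = integral {0..1} (\<lambda>s. (norm (g s))\<^sup>2 / \<rho> s)"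
      using norm2 \<psi>1 by simp
    show "integral {0..1} (\<lambda>t. V (w (\<phi> t))) = integral {0..1} (\<lambda>s. V (w s) * \<rho> s)"
      using Vint \<psi>1 by simp
  qed
qed


lemma real_limit_aux:
  fixes X L G C :: real
  assumes "L \<ge> 0" "G \<ge> 0" "C \<ge> 0"
    and H: "\<And>e. 0 < e \<Longrightarrow> e \<le> 1 \<Longrightarrow> X \<le> (L + e * G) * (L + e * C)"
  shows "X \<le> L\<^sup>2"
proof (rule ccontr)
  assume "\<not> X \<le> L\<^sup>2"
  then have d: "X - L\<^sup>2 > 0" by simp
  define K where "K = L * (G + C) + G * C"
  have K0: "K \<ge> 0" using assms unfolding K_def by simp
  define e where "e = min 1 ((X - L\<^sup>2) / (2 * (K + 1)))"
  have e0: "e > 0" using d K0 unfolding e_def by simp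
  have e1: "e \<le> 1" unfolding e_def by simp
  have "(L + e * G) * (L + e * C) = L\<^sup>2 + e * (L * (G + C)) + e * (e * (G * C))"
    by (simp add: algebra_simps power2_eq_square)
  also have "\<dots> \<le> L\<^sup>2 + e * (L * (G + C)) + e * (G * C)"
    using e0 e1 assms by (simp add: mult_left_le_one_le mult_nonneg_nonneg)
  also have "\<dots> = L\<^sup>2 + e * K" unfolding K_def by (simp add: algebra_simps)
  also have "e * K \<le> ((X - L\<^sup>2) / (2 * (K + 1))) * K"
    using K0 unfolding e_def by (intro mult_right_mono) auto
  also have "\<dots> < X - L\<^sup>2"
  proof -
    have "((X - L\<^sup>2) / (2 * (K + 1))) * K = (X - L\<^sup>2) * (K / (2 * (K + 1)))" by simp
    also have "\<dots> < (X - L\<^sup>2) * 1"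
      using d K0 by (intro mult_strict_left_mono) (auto simp: field_simps)
    finally show ?thesis by simp
  qed
  finally show False using H[OF e0 e1] by simp
qed

lemma real_cs_aux:
  fixes L G C :: real
  assumes "L \<ge> 0" "G \<ge> 0" "C > 0"
    and H: "\<And>l. l > 0 \<Longrightarrow> L \<le> (l * G + C / l) / 2"
  shows "L\<^sup>2 \<le> G * C"
proof (cases "G = 0")
  case True
  have "L \<le> 0"
  proof (rule ccontr)
    assume "\<not> L \<le> 0"
    then have L0: "L > 0" by simp
    have "L \<le> (C / C * L) / 2" using H[of "C / L"] True L0 assms by (simp add: field_simps)
    then show False using L0 assms by simp
  qed
  then show ?thesis using assms True by simp
next
  case False
  then have G0: "G > 0" using assms by simp
  define a where "a = sqrt G"
  define b where "b = sqrt C"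
  have a0: "a > 0" and b0: "b > 0" using G0 assms unfolding a_def b_def by auto
  have Ga: "G = a * a" and Cb: "C = b * b" using G0 assms unfolding a_def b_def by auto
  define l where "l = b / a"
  have l0: "l > 0" using a0 b0 unfolding l_def by simp
  have "l * G = b * a" using a0 unfolding l_def Ga by (simp add: field_simps)
  moreover have "C / l = b * a" using a0 b0 unfolding l_def Cb by (simp add: field_simps)
  ultimately have "L \<le> b * a" using H[OF l0] by (simp add: mult.commute)
  then have "L\<^sup>2 \<le> (b * a)\<^sup>2" using assms by (intro power_mono) auto
  then show ?thesis using Ga Cb by (simp add: power2_eq_square algebra_simps)
qed

lemma pw1:
  fixes n q e :: real
  assumes n: "n \<ge> 0" and q: "q > 0" and e: "e > 0" "e \<le> 1"
  shows "n\<^sup>2 / max e (min (n / q) (1 / e)) \<le> n * q + e * n\<^sup>2"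
proof -
  define d where "d = max e (min (n / q) (1 / e))"
  have d0: "d > 0" using e unfolding d_def by simp
  show ?thesis
  proof (cases "n / q \<le> 1 / e")
    case True
    show ?thesis
    proof (cases "n = 0")
      case True then show ?thesis by simp
    next
      case False
      then have np: "n > 0" using n by simp
      have "d \<ge> n / q" using True unfolding d_def by simp
      then have "n\<^sup>2 / d \<le> n\<^sup>2 / (n / q)"
        using np q d0 by (intro divide_left_mono) auto
      also have "\<dots> = n * q" using np q by (simp add: power2_eq_square field_simps)
      finally show ?thesis using e n unfolding d_def by (simp add: add_increasing2)
    qed
  next
    case False
    then have "d \<ge> 1 / e" unfolding d_def by simp
    then have "n\<^sup>2 / d \<le> n\<^sup>2 / (1 / e)"
      using e d0 by (intro divide_left_mono) auto
    also have "\<dots> = e * n\<^sup>2" by simp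
    finally show ?thesis using n q unfolding d_def by (simp add: add_increasing)
  qed
qed

lemma pw2:
  fixes n q e :: real
  assumes n: "n \<ge> 0" and q: "q > 0" and e: "e > 0" "e \<le> 1"
  shows "q\<^sup>2 * max e (min (n / q) (1 / e)) \<le> n * q + e * q\<^sup>2"
proof -
  have "max e (min (n / q) (1 / e)) \<le> n / q + e"
    using n q e by (auto simp: max_def min_def)
  then have "q\<^sup>2 * max e (min (n / q) (1 / e)) \<le> q\<^sup>2 * (n / q + e)"
    by (intro mult_left_mono) auto
  also have "\<dots> = n * q + e * q\<^sup>2" using q by (simp add: power2_eq_square field_simps)
  finally show ?thesis .
qed

lemma bprod:
  fixes F f :: "real \<Rightarrow> real"
  assumes "continuous_on {0..1} f" "F absolutely_integrable_on {0..1}"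
  shows "(\<lambda>x. F x * f x) absolutely_integrable_on {0..1}"
proof -
  have "(\<lambda>x. f x * F x) absolutely_integrable_on {0..1}"
  proof (rule absolutely_integrable_bounded_measurable_product_real)
    show "f \<in> borel_measurable (lebesgue_on {0..1})"
      using assms(1) by (rule continuous_imp_measurable_on_sets_lebesgue) simp
    show "bounded (f ` {0..1})"
      using assms(1) by (simp add: compact_continuous_image compact_imp_bounded)
  qed (use assms in auto)
  then show ?thesis by (simp add: mult.commute)
qed

lemma ng_abs:
  fixes g :: "real \<Rightarrow> real ^ 'n"
  assumes "g absolutely_integrable_on {0..1}"
  shows "(\<lambda>s. norm (g s)) absolutely_integrable_on {0..1}"
  using absolutely_integrable_norm[OF assms] by (simp add: o_def)

lemma cs_integral:
  fixes g :: "real \<Rightarrow> real ^ 'n" and v :: "real \<Rightarrow> real"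
  assumes gint: "g absolutely_integrable_on {0..1}" and g2: "(\<lambda>t. (norm (g t))\<^sup>2) integrable_on {0..1}"
    and vc: "continuous_on {0..1} v" and vp: "\<And>s. s \<in> {0..1} \<Longrightarrow> v s > 0"
  shows "(integral {0..1} (\<lambda>s. norm (g s) * sqrt (v s)))\<^sup>2
          \<le> integral {0..1} (\<lambda>s. (norm (g s))\<^sup>2) * integral {0..1} v"
proof (rule real_cs_aux)
  have pint: "(\<lambda>s. norm (g s) * sqrt (v s)) absolutely_integrable_on {0..1}"
    using vc by (intro bprod ng_abs gint continuous_intros)
  then have pint': "(\<lambda>s. norm (g s) * sqrt (v s)) integrable_on {0..1}"
    using set_lebesgue_integral_eq_integral(1) by blast
  have vint: "v integrable_on {0..1}" using vc by (rule integrable_continuous_interval)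
  show "0 \<le> integral {0..1} (\<lambda>s. norm (g s) * sqrt (v s))"
    using pint' vp by (intro integral_nonneg) (auto intro!: mult_nonneg_nonneg simp: less_imp_le)
  show "0 \<le> integral {0..1} (\<lambda>s. (norm (g s))\<^sup>2)"
    using g2 by (intro integral_nonneg) auto
  obtain m where m: "m > 0" "\<And>s. s \<in> {0..1} \<Longrightarrow> m \<le> v s"
  proof -
    obtain s0 where "s0 \<in> {0..1}" "\<And>s. s \<in> {0..1} \<Longrightarrow> v s0 \<le> v s"
      using continuous_attains_inf[OF compact_Icc _ vc] by auto
    then show ?thesis using that[of "v s0"] vp by auto
  qed
  have "integral {0..1} (\<lambda>_::real. m) \<le> integral {0..1} v"
    by (rule integral_le) (use m vint in auto)
  then show "0 < integral {0..1} v" using m by simp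
  fix l :: real assume l: "l > 0"
  have "integral {0..1} (\<lambda>s. norm (g s) * sqrt (v s)) \<le> integral {0..1} (\<lambda>s. (l / 2) * (norm (g s))\<^sup>2 + (1 / (2 * l)) * v s)"
  proof (rule integral_le)
    show "(\<lambda>s. (l / 2) * (norm (g s))\<^sup>2 + (1 / (2 * l)) * v s) integrable_on {0..1}"
      by (intro integrable_add integrable_on_mult_right[OF g2] integrable_on_mult_right[OF vint])
    fix s :: real assume s: "s \<in> {0..1}"
    define n where "n = norm (g s)"
    define q where "q = sqrt (v s)"
    have q2: "q\<^sup>2 = v s" using vp[OF s] unfolding q_def by simp
    have "0 \<le> (l * n - q)\<^sup>2" by simp
    then have "2 * l * (n * q) \<le> l\<^sup>2 * n\<^sup>2 + q\<^sup>2" by (simp add: power2_eq_square algebra_simps)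
    then have "n * q \<le> (l / 2) * n\<^sup>2 + (1 / (2 * l)) * q\<^sup>2"
      using l by (simp add: field_simps power2_eq_square)
    then show "norm (g s) * sqrt (v s) \<le> (l / 2) * (norm (g s))\<^sup>2 + (1 / (2 * l)) * v s"
      using q2 unfolding n_def q_def by simp
  qed (fact pint')
  also have "\<dots> = (l * integral {0..1} (\<lambda>s. (norm (g s))\<^sup>2) + integral {0..1} v / l) / 2"
  proof -
    have "(\<lambda>s. (l / 2) * (norm (g s))\<^sup>2) integrable_on {0..1}" "(\<lambda>s. (1 / (2 * l)) * v s) integrable_on {0..1}"
      by (rule integrable_on_mult_right[OF g2], rule integrable_on_mult_right[OF vint])
    then show ?thesis using l by (subst integral_add) (auto simp: field_simps)
  qed
  finally show "integral {0..1} (\<lambda>s. norm (g s) * sqrt (v s)) \<le> (l * integral {0..1} (\<lambda>s. (norm (g s))\<^sup>2) + integral {0..1} v / l) / 2" .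
qed

lemma approx:
  fixes g :: "real \<Rightarrow> real ^ 'n" and v :: "real \<Rightarrow> real" and X :: real
  assumes gint: "g absolutely_integrable_on {0..1}" and g2: "(\<lambda>t. (norm (g t))\<^sup>2) integrable_on {0..1}"
    and vc: "continuous_on {0..1} v" and vp: "\<And>s. s \<in> {0..1} \<Longrightarrow> v s > 0"
    and HX: "\<And>\<rho>. continuous_on {0..1} \<rho> \<Longrightarrow> (\<And>s. s \<in> {0..1} \<Longrightarrow> \<rho> s > 0) \<Longrightarrow>
        X \<le> integral {0..1} (\<lambda>s. (norm (g s))\<^sup>2 / \<rho> s) * integral {0..1} (\<lambda>s. v s * \<rho> s)"
  shows "X \<le> (integral {0..1} (\<lambda>s. norm (g s) * sqrt (v s)))\<^sup>2"
proof -
  define L where "L = integral {0..1} (\<lambda>s. norm (g s) * sqrt (v s))"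
  define G where "G = integral {0..1} (\<lambda>s. (norm (g s))\<^sup>2)"
  define C where "C = integral {0..1} v"
  have pint: "(\<lambda>s. norm (g s) * sqrt (v s)) absolutely_integrable_on {0..1}"
    using vc by (intro bprod ng_abs gint continuous_intros)
  then have pint': "(\<lambda>s. norm (g s) * sqrt (v s)) integrable_on {0..1}"
    using set_lebesgue_integral_eq_integral(1) by blast
  have vint: "v integrable_on {0..1}" using vc by (rule integrable_continuous_interval)
  have L0: "L \<ge> 0" unfolding L_def
    using pint' vp by (intro integral_nonneg) (auto intro!: mult_nonneg_nonneg simp: less_imp_le)
  have G0: "G \<ge> 0" unfolding G_def using g2 by (intro integral_nonneg) auto
  have C0: "C \<ge> 0" unfolding C_def using vint vp by (intro integral_nonneg) (auto simp: less_imp_le)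
  define r where "r s = norm (g s) / sqrt (v s)" for s
  have gm: "g \<in> borel_measurable (lebesgue_on {0..1})"
    using gint by (rule absolutely_integrable_imp_borel_measurable) simp
  have vm: "v \<in> borel_measurable (lebesgue_on {0..1})"
    using vc by (rule continuous_imp_measurable_on_sets_lebesgue) simp
  have rm: "r \<in> borel_measurable (lebesgue_on {0..1})"
    unfolding r_def using gm vm by measurable
  have "(\<lambda>x. indicator {0..1} x *\<^sub>R r x) \<in> borel_measurable lebesgue"
    using rm by (subst (asm) borel_measurable_restrict_space_iff) auto
  then have "(\<lambda>x. indicator {0..1} x *\<^sub>R r x) measurable_on {0..1}"
    by (rule lebesgue_measurable_imp_measurable_on_real) simp
  then obtain N fk where N: "negligible N" and fkc: "\<And>k. continuous_on UNIV (fk k)"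
    and fkl: "\<And>x. x \<notin> N \<Longrightarrow> (\<lambda>k. fk k x) \<longlonglongrightarrow> (if x \<in> {0..1} then indicator {0..1} x *\<^sub>R r x else 0)"
    unfolding measurable_on_def by blast
  define S where "S = {0..1::real} - N"
  have negS: "negligible {x \<in> {0..1} - S. f x \<noteq> 0}" "negligible {x \<in> S - {0..1}. f x \<noteq> 0}" for f :: "real \<Rightarrow> real"
    using N unfolding S_def by (auto intro: negligible_subset[of N])
  have intS: "integral {0..1} f = integral S f" for f :: "real \<Rightarrow> real"
    by (rule integral_spike_set[OF negS])
  have integrS: "f integrable_on S" if "f integrable_on {0..1}" for f :: "real \<Rightarrow> real"
    by (rule integrable_spike_set[OF that negS])
  have rl: "(\<lambda>k. fk k x) \<longlonglongrightarrow> r x" if "x \<in> S" for x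
    using fkl[of x] that unfolding S_def by (simp add: indicator_def)
  have main: "X \<le> (L + e * G) * (L + e * C)" if e: "0 < e" "e \<le> 1" for e
  proof -
    define B where "B = 1 / e"
    have Be: "e \<le> B" using e unfolding B_def by (simp add: field_simps) (metis mult_le_one less_imp_le e(2))
    define \<rho>k where "\<rho>k k s = max e (min (fk k s) B)" for k s
    define \<rho>s where "\<rho>s s = max e (min (r s) B)" for s
    have \<rho>kc: "continuous_on {0..1} (\<rho>k k)" for k
      unfolding \<rho>k_def using fkc[of k]
      by (intro continuous_on_max continuous_on_min continuous_on_const) (auto intro: continuous_on_subset)
    have \<rho>kp: "\<rho>k k s \<ge> e" for k s unfolding \<rho>k_def by simp
    have \<rho>kB: "\<rho>k k s \<le> B" for k s unfolding \<rho>k_def using Be by simp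
    have \<rho>sp: "\<rho>s s \<ge> e" for s unfolding \<rho>s_def by simp
    have \<rho>conv: "(\<lambda>k. \<rho>k k x) \<longlonglongrightarrow> \<rho>s x" if "x \<in> S" for x
      unfolding \<rho>k_def \<rho>s_def by (intro tendsto_max tendsto_min tendsto_const rl[OF that])
    define A1 where "A1 k = integral {0..1} (\<lambda>s. (norm (g s))\<^sup>2 / \<rho>k k s)" for k
    define B1 where "B1 k = integral {0..1} (\<lambda>s. v s * \<rho>k k s)" for k
    have Xk: "X \<le> A1 k * B1 k" for k
      unfolding A1_def B1_def using e by (intro HX \<rho>kc) (auto intro: less_le_trans[OF _ \<rho>kp])
    have g2abs: "(\<lambda>s. (norm (g s))\<^sup>2) absolutely_integrable_on {0..1}"
      using g2 by (rule nonnegative_absolutely_integrable_1) simp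
    have f1int: "(\<lambda>s. (norm (g s))\<^sup>2 / \<rho>k k s) integrable_on {0..1}" for k
    proof -
      have "(\<lambda>s. (norm (g s))\<^sup>2 * (1 / \<rho>k k s)) absolutely_integrable_on {0..1}"
        using \<rho>kc[of k] \<rho>kp[of k] e by (intro bprod g2abs continuous_intros) (metis less_le_trans order_less_irrefl)+
      then show ?thesis using set_lebesgue_integral_eq_integral(1) by fastforce
    qed
    have f2int: "(\<lambda>s. v s * \<rho>k k s) integrable_on {0..1}" for k
      using vc \<rho>kc[of k] by (intro integrable_continuous_interval continuous_intros)
    have DC1: "(\<lambda>s. (norm (g s))\<^sup>2 / \<rho>s s) integrable_on S \<and>
        (\<lambda>k. integral S (\<lambda>s. (norm (g s))\<^sup>2 / \<rho>k k s)) \<longlonglongrightarrow> integral S (\<lambda>s. (norm (g s))\<^sup>2 / \<rho>s s)"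
    proof -
      have a1: "(\<lambda>s. (norm (g s))\<^sup>2 / \<rho>k k s) integrable_on S" for k by (rule integrS[OF f1int])
      have a2: "(\<lambda>s. (norm (g s))\<^sup>2 / e) integrable_on S"
        by (rule integrS) (rule integrable_on_divide[OF g2])
      have a3: "norm ((norm (g x))\<^sup>2 / \<rho>k k x) \<le> (norm (g x))\<^sup>2 / e" if "x \<in> S" for k x
        using e \<rho>kp[of k x] by (simp add: divide_left_mono abs_of_nonneg)
      have a4: "(\<lambda>k. (norm (g x))\<^sup>2 / \<rho>k k x) \<longlonglongrightarrow> (norm (g x))\<^sup>2 / \<rho>s x" if "x \<in> S" for x
        using \<rho>sp[of x] e by (intro tendsto_divide tendsto_const \<rho>conv[OF that]) auto
      show ?thesis using dominated_convergence[where f="\<lambda>k s. (norm (g s))\<^sup>2 / \<rho>k k s", OF a1 a2 a3 a4] by blast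
    qed
    have DC2: "(\<lambda>s. v s * \<rho>s s) integrable_on S \<and>
        (\<lambda>k. integral S (\<lambda>s. v s * \<rho>k k s)) \<longlonglongrightarrow> integral S (\<lambda>s. v s * \<rho>s s)"
    proof -
      have a1: "(\<lambda>s. v s * \<rho>k k s) integrable_on S" for k by (rule integrS[OF f2int])
      have a2: "(\<lambda>s. v s * B) integrable_on S"
        by (rule integrS) (rule integrable_on_mult_left[OF vint])
      have a3: "norm (v x * \<rho>k k x) \<le> v x * B" if "x \<in> S" for k x
      proof -
        have vx: "v x > 0" using that vp unfolding S_def by auto
        have "0 \<le> \<rho>k k x" using \<rho>kp[of k x] e by simp
        then have "norm (v x * \<rho>k k x) = v x * \<rho>k k x" using vx by (simp add: abs_mult)
        also have "\<dots> \<le> v x * B" using \<rho>kB[of k x] vx by (simp add: mult_left_mono)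
        finally show ?thesis .
      qed
      have a4: "(\<lambda>k. v x * \<rho>k k x) \<longlonglongrightarrow> v x * \<rho>s x" if "x \<in> S" for x
        by (intro tendsto_mult tendsto_const \<rho>conv[OF that])
      show ?thesis using dominated_convergence[where f="\<lambda>k s. v s * \<rho>k k s", OF a1 a2 a3 a4] by blast
    qed
    have "(\<lambda>k. A1 k * B1 k) \<longlonglongrightarrow> integral S (\<lambda>s. (norm (g s))\<^sup>2 / \<rho>s s) * integral S (\<lambda>s. v s * \<rho>s s)"
      unfolding A1_def B1_def intS using DC1 DC2 by (intro tendsto_mult) auto
    then have X1: "X \<le> integral S (\<lambda>s. (norm (g s))\<^sup>2 / \<rho>s s) * integral S (\<lambda>s. v s * \<rho>s s)"
      by (rule LIMSEQ_le_const) (use Xk in auto)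
    have A1le: "integral S (\<lambda>s. (norm (g s))\<^sup>2 / \<rho>s s) \<le> L + e * G"
    proof -
      have "integral S (\<lambda>s. (norm (g s))\<^sup>2 / \<rho>s s) \<le> integral S (\<lambda>s. norm (g s) * sqrt (v s) + e * (norm (g s))\<^sup>2)"
      proof (rule integral_le)
        show "(\<lambda>s. (norm (g s))\<^sup>2 / \<rho>s s) integrable_on S" using DC1 by blast
        show "(\<lambda>s. norm (g s) * sqrt (v s) + e * (norm (g s))\<^sup>2) integrable_on S"
          by (intro integrS integrable_add pint' integrable_on_mult_right[OF g2])
        fix x assume x: "x \<in> S"
        then have vx: "v x > 0" using vp unfolding S_def by auto
        show "(norm (g x))\<^sup>2 / \<rho>s x \<le> norm (g x) * sqrt (v x) + e * (norm (g x))\<^sup>2"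
          using pw1[of "norm (g x)" "sqrt (v x)" e] vx e unfolding \<rho>s_def r_def B_def by simp
      qed
      also have "\<dots> = L + e * G"
        unfolding L_def G_def intS[symmetric] using pint' g2
        by (subst integral_add) (auto intro: integrable_on_mult_right)
      finally show ?thesis .
    qed
    have B1le: "integral S (\<lambda>s. v s * \<rho>s s) \<le> L + e * C"
    proof -
      have "integral S (\<lambda>s. v s * \<rho>s s) \<le> integral S (\<lambda>s. norm (g s) * sqrt (v s) + e * v s)"
      proof (rule integral_le)
        show "(\<lambda>s. v s * \<rho>s s) integrable_on S" using DC2 by blast
        show "(\<lambda>s. norm (g s) * sqrt (v s) + e * v s) integrable_on S"
          by (intro integrS integrable_add pint' integrable_on_mult_right[OF vint])
        fix x assume x: "x \<in> S"
        then have vx: "v x > 0" using vp unfolding S_def by auto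
        have "(sqrt (v x))\<^sup>2 * \<rho>s x \<le> norm (g x) * sqrt (v x) + e * (sqrt (v x))\<^sup>2"
          using pw2[of "norm (g x)" "sqrt (v x)" e] vx e unfolding \<rho>s_def r_def B_def by simp
        then show "v x * \<rho>s x \<le> norm (g x) * sqrt (v x) + e * v x"
          using vx by simp
      qed
      also have "\<dots> = L + e * C"
        unfolding L_def C_def intS[symmetric] using pint' vint
        by (subst integral_add) (auto intro: integrable_on_mult_right)
      finally show ?thesis .
    qed
    have A0: "integral S (\<lambda>s. (norm (g s))\<^sup>2 / \<rho>s s) \<ge> 0"
    proof (rule integral_nonneg)
      show "(\<lambda>s. (norm (g s))\<^sup>2 / \<rho>s s) integrable_on S" using DC1 by blast
      fix x assume "x \<in> S"
      have "0 \<le> \<rho>s x" using \<rho>sp[of x] e by simp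
      then show "0 \<le> (norm (g x))\<^sup>2 / \<rho>s x" by simp
    qed
    have B0: "integral S (\<lambda>s. v s * \<rho>s s) \<ge> 0"
    proof (rule integral_nonneg)
      show "(\<lambda>s. v s * \<rho>s s) integrable_on S" using DC2 by blast
      fix x assume "x \<in> S"
      then have "0 \<le> v x" using vp unfolding S_def by (auto simp: less_imp_le)
      moreover have "0 \<le> \<rho>s x" using \<rho>sp[of x] e by simp
      ultimately show "0 \<le> v x * \<rho>s x" by simp
    qed
    from X1 show ?thesis
      using mult_mono[OF A1le B1le] A0 B0 L0 G0 C0 e by (smt (verit) mult_nonneg_nonneg)
  qed
  show ?thesis unfolding L_def[symmetric]
    by (rule real_limit_aux[OF L0 G0 C0 main])
qed


lemma pos_integral:
  fixes \<rho> :: "real \<Rightarrow> real"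
  assumes rc: "continuous_on {0..1} \<rho>" and rp: "\<And>s. s \<in> {0..1} \<Longrightarrow> \<rho> s > 0"
  shows "integral {0..1} \<rho> > 0"
proof -
  obtain m where m: "m > 0" "\<And>s. s \<in> {0..1} \<Longrightarrow> m \<le> \<rho> s"
  proof -
    obtain s0 where "s0 \<in> {0..1}" "\<And>s. s \<in> {0..1} \<Longrightarrow> \<rho> s0 \<le> \<rho> s"
      using continuous_attains_inf[OF compact_Icc _ rc] by auto
    then show ?thesis using that[of "\<rho> s0"] rp by auto
  qed
  have "integral {0..1} (\<lambda>_::real. m) \<le> integral {0..1} \<rho>"
    by (rule integral_le) (use m rc in \<open>auto intro: integrable_continuous_interval\<close>)
  then show ?thesis using m by simp
qed

lemma H1_uniq:
  fixes z h h' :: "real \<Rightarrow> real ^ 'n"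
  assumes H: "H1_weak_deriv z h" and H': "H1_weak_deriv z h'"
  shows "integral {0..1} (\<lambda>t. (norm (h' t))\<^sup>2) = integral {0..1} (\<lambda>t. (norm (h t))\<^sup>2)"
proof -
  have hi: "h absolutely_integrable_on {0..1}" and zh: "\<And>t. t \<in> {0..1} \<Longrightarrow> z t = z 0 + integral {0..t} h"
    using H unfolding H1_weak_deriv_def by blast+
  have hi': "h' absolutely_integrable_on {0..1}" and zh': "\<And>t. t \<in> {0..1} \<Longrightarrow> z t = z 0 + integral {0..t} h'"
    using H' unfolding H1_weak_deriv_def by blast+
  have neg_i: "negligible {t\<in>{0..1}. (h t - h' t) $ i \<noteq> 0}" for i
  proof (rule uniq_real)
    show "(\<lambda>t. (h t - h' t) $ i) absolutely_integrable_on {0..1}"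
      using absolutely_integrable_component[OF set_integral_diff(1)[OF hi hi'], of "axis i 1"]
      by (simp add: inner_axis)
    fix t :: real assume t: "t \<in> {0..1}"
    have i1: "h integrable_on {0..t}" using hi t
      by (auto intro: integrable_on_subinterval simp: absolutely_integrable_on_def)
    have i2: "h' integrable_on {0..t}" using hi' t
      by (auto intro: integrable_on_subinterval simp: absolutely_integrable_on_def)
    have "integral {0..t} (\<lambda>x. (h x - h' x) $ i) = integral {0..t} (\<lambda>x. h x - h' x) $ i"
      by (rule integral_component_eq_cart[OF integrable_diff[OF i1 i2]])
    also have "\<dots> = (integral {0..t} h - integral {0..t} h') $ i"
      using i1 i2 by (simp add: integral_diff)
    also have "integral {0..t} h = integral {0..t} h'"
      using zh[OF t] zh'[OF t] by simp
    finally show "integral {0..t} (\<lambda>x. (h x - h' x) $ i) = 0" by simp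
  qed
  have eqU: "{t\<in>{0..1}. h t \<noteq> h' t} = \<Union> ((\<lambda>i. {t\<in>{0..1}. (h t - h' t) $ i \<noteq> 0}) ` UNIV)"
    by (auto simp: vec_eq_iff)
  have "negligible {t\<in>{0..1}. h t \<noteq> h' t}"
    unfolding eqU by (rule negligible_Union) (use neg_i in auto)
  then show ?thesis
    by (rule integral_spike) auto
qed

lemma wderiv_ok:
  assumes "H1 z"
  shows "H1_weak_deriv z (wderiv z)"
  using assms unfolding H1_def wderiv_def by (rule someI_ex)

lemma H1_cont:
  assumes "H1_weak_deriv z g"
  shows "continuous_on {0..1} z"
proof -
  have gi: "g integrable_on {0..1}" and zg: "\<And>t. t \<in> {0..1} \<Longrightarrow> z t = z 0 + integral {0..t} g"
    using assms unfolding H1_weak_deriv_def absolutely_integrable_on_def by blast+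
  have "continuous_on {0..1} (\<lambda>t. z 0 + integral {0..t} g)"
    using indefinite_integral_continuous_1[OF gi] by (intro continuous_intros)
  moreover have "z 0 + integral {0..x} g = z x" if "x \<in> {0..1}" for x
    using zg[OF that] by (rule sym)
  ultimately show ?thesis
    by (rule continuous_on_eq)
qed

lemma Lnonneg:
  fixes g :: "real \<Rightarrow> real ^ 'n" and v :: "real \<Rightarrow> real"
  assumes gint: "g absolutely_integrable_on {0..1}"
    and vc: "continuous_on {0..1} v" and vp: "\<And>s. s \<in> {0..1} \<Longrightarrow> v s > 0"
  shows "integral {0..1} (\<lambda>s. norm (g s) * sqrt (v s)) \<ge> 0"
proof -
  have pint: "(\<lambda>s. norm (g s) * sqrt (v s)) absolutely_integrable_on {0..1}"
    using vc by (intro bprod ng_abs gint continuous_intros)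
  then have "(\<lambda>s. norm (g s) * sqrt (v s)) integrable_on {0..1}"
    using set_lebesgue_integral_eq_integral(1) by blast
  then show ?thesis
    using vp by (intro integral_nonneg) (auto intro!: mult_nonneg_nonneg simp: less_imp_le)
qed

theorem propositionA3:
  fixes \<Omega> :: "(real ^ 'n) set" and p0 p1 :: "real ^ 'n" and V :: "real ^ 'n \<Rightarrow> real"
    and u :: "real \<Rightarrow> real ^ 'n"
  assumes "p0 \<in> \<Omega>" and "p1 \<in> \<Omega>"
    and "continuous_on \<Omega> V" and "\<And>x. x \<in> \<Omega> \<Longrightarrow> V x > 0"
    and "u \<in> admissible \<Omega> p0 p1"
    and "\<And>w. w \<in> admissible \<Omega> p0 p1 \<Longrightarrow> Mfun V u \<le> Mfun V w"
  shows "\<forall>w \<in> admissible \<Omega> p0 p1. Lfun V u \<le> Lfun V w"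
proof
  fix w assume wA: "w \<in> admissible \<Omega> p0 p1"
  have Vc: "continuous_on {0..1} (\<lambda>t. V (z t))" if "H1 z" "\<forall>t\<in>{0..1}. z t \<in> \<Omega>" for z
  proof (rule continuous_on_compose2[OF assms(3) H1_cont[OF wderiv_ok[OF that(1)]]])
    show "z ` {0..1} \<subseteq> \<Omega>" using that(2) by auto
  qed
  have Vp: "V (z t) > 0" if "\<forall>t\<in>{0..1}. z t \<in> \<Omega>" "t \<in> {0..1}" for z t
    using that assms(4) by auto
  have uH: "H1 u" and uO: "\<forall>t\<in>{0..1}. u t \<in> \<Omega>"
    using assms(5) unfolding admissible_def by auto
  have wH: "H1 w" and wO: "\<forall>t\<in>{0..1}. w t \<in> \<Omega>" and w0: "w 0 = p0" and w1: "w 1 = p1"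
    using wA unfolding admissible_def by auto
  have gu: "H1_weak_deriv u (wderiv u)" by (rule wderiv_ok[OF uH])
  have gw: "H1_weak_deriv w (wderiv w)" by (rule wderiv_ok[OF wH])
  have guI: "wderiv u absolutely_integrable_on {0..1}" "(\<lambda>t. (norm (wderiv u t))\<^sup>2) integrable_on {0..1}"
    using gu unfolding H1_weak_deriv_def by blast+
  have gwI: "wderiv w absolutely_integrable_on {0..1}" "(\<lambda>t. (norm (wderiv w t))\<^sup>2) integrable_on {0..1}"
    using gw unfolding H1_weak_deriv_def by blast+
  define X where "X = (Lfun V u)\<^sup>2"
  have X2M: "X \<le> 2 * Mfun V u"
    unfolding X_def Lfun_def Mfun_def
    using cs_integral[OF guI Vc[OF uH uO]] Vp[OF uO] by simp
  have "X \<le> (integral {0..1} (\<lambda>s. norm (wderiv w s) * sqrt (V (w s))))\<^sup>2"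
  proof (rule approx[OF gwI Vc[OF wH wO]])
    show "V (w s) > 0" if "s \<in> {0..1}" for s using Vp[OF wO that] .
    fix \<rho> :: "real \<Rightarrow> real"
    assume rc: "continuous_on {0..1} \<rho>" and rp: "\<And>s. s \<in> {0..1} \<Longrightarrow> \<rho> s > 0"
    define c where "c = integral {0..1} \<rho>"
    have c0: "c > 0" unfolding c_def by (rule pos_integral[OF rc rp])
    define \<rho>n where "\<rho>n s = \<rho> s / c" for s
    have rnc: "continuous_on {0..1} \<rho>n" unfolding \<rho>n_def using rc c0 by (auto intro!: continuous_intros)
    have rnp: "\<rho>n s > 0" if "s \<in> {0..1}" for s unfolding \<rho>n_def using rp[OF that] c0 by simp
    have rn1: "integral {0..1} \<rho>n = 1" unfolding \<rho>n_def using c0 by (simp add: c_def[symmetric])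
    obtain \<phi> h where \<phi>in: "\<forall>t\<in>{0..1}. \<phi> t \<in> {0..1}" and \<phi>0: "\<phi> 0 = 0" and \<phi>1: "\<phi> 1 = 1"
      and Hh: "H1_weak_deriv (\<lambda>t. w (\<phi> t)) h"
      and I1: "integral {0..1} (\<lambda>t. (norm (h t))\<^sup>2) = integral {0..1} (\<lambda>s. (norm (wderiv w s))\<^sup>2 / \<rho>n s)"
      and I2: "integral {0..1} (\<lambda>t. V (w (\<phi> t))) = integral {0..1} (\<lambda>s. V (w s) * \<rho>n s)"
      by (rule reparam[OF gw rnc rnp rn1 Vc[OF wH wO]])
    define wt where "wt = (\<lambda>t. w (\<phi> t))"
    have wtH: "H1 wt" unfolding H1_def wt_def using Hh by blast
    have wtA: "wt \<in> admissible \<Omega> p0 p1"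
      unfolding admissible_def using wtH \<phi>in wO \<phi>0 \<phi>1 w0 w1 by (auto simp: wt_def)
    have "2 * Mfun V wt = integral {0..1} (\<lambda>t. (norm (wderiv wt t))\<^sup>2) * integral {0..1} (\<lambda>t. V (wt t))"
      unfolding Mfun_def by simp
    also have "integral {0..1} (\<lambda>t. (norm (wderiv wt t))\<^sup>2) = integral {0..1} (\<lambda>t. (norm (h t))\<^sup>2)"
      by (rule H1_uniq) (use Hh wderiv_ok[OF wtH] in \<open>simp_all add: wt_def\<close>)
    also have "integral {0..1} (\<lambda>t. V (wt t)) = integral {0..1} (\<lambda>s. V (w s) * \<rho>n s)"
      unfolding wt_def by (rule I2)
    also have "integral {0..1} (\<lambda>t. (norm (h t))\<^sup>2) = c * integral {0..1} (\<lambda>s. (norm (wderiv w s))\<^sup>2 / \<rho> s)"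
      unfolding I1 \<rho>n_def using c0
      by (subst integral_mult_right[symmetric]) (rule integral_cong, simp add: field_simps)
    also have "integral {0..1} (\<lambda>s. V (w s) * \<rho>n s) = integral {0..1} (\<lambda>s. V (w s) * \<rho> s) / c"
      unfolding \<rho>n_def by (subst integral_divide[symmetric]) (rule integral_cong, simp)
    finally have "2 * Mfun V wt = integral {0..1} (\<lambda>s. (norm (wderiv w s))\<^sup>2 / \<rho> s) * integral {0..1} (\<lambda>s. V (w s) * \<rho> s)"
      using c0 by simp
    moreover have "Mfun V u \<le> Mfun V wt" by (rule assms(6)[OF wtA])
    ultimately show "X \<le> integral {0..1} (\<lambda>s. (norm (wderiv w s))\<^sup>2 / \<rho> s) * integral {0..1} (\<lambda>s. V (w s) * \<rho> s)"
      using X2M by simp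
  qed
  then have "(Lfun V u)\<^sup>2 \<le> (Lfun V w)\<^sup>2" unfolding X_def Lfun_def .
  moreover have "Lfun V w \<ge> 0" unfolding Lfun_def
    by (rule Lnonneg[OF gwI(1) Vc[OF wH wO]]) (use Vp[OF wO] in auto)
  ultimately show "Lfun V u \<le> Lfun V w" by (rule power2_le_imp_le)
qed

end
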